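(* Let $T\in(\mathbb{C}^n)^{\otimes3}$ be an $r$-diagonalisable symmetric tensor, $T=\sum_{i=1}^ru_i^{\otimes3}$ with the $u_i$ linearly independent, with $\kappa(T)\le B$, and let $T'\in(\mathbb{C}^n)^{\otimes3}$ satisfy $\|T-T'\|_F\le\delta$. Let $P\in\mathbb{C}^{n\times r}$ be a semi-unitary matrix whose column span is $\mathrm{span}\{u_1,\dots,u_r\}$, and let $P'\in\mathbb{C}^{n\times r}$ satisfy $\|P-P'\|\le\varepsilon_1<1$. Let $S=(\overline P\otimes\overline P\otimes\overline P).T$ and $S'=(\overline{P'}\otimes\overline{P'}\otimes\overline{P'}).T'$. Then $$\|S-S'\|_F\le 7\varepsilon_1r^{7/2}B^{3/2}+8\delta r^{3/2}.$$
   Context: $\kappa(T)=\|U\|_F^2+\|U^\dagger\|_F^2$ where $U$ has rows $u_1,\dots,u_r$ and $U^\dagger$ is the Moore–Penrose pseudoinverse (independent of the decomposition). Semi-unitary means $P^*P=I_r$; $\overline P$ is the entrywise conjugate. $\|P-P'\|$ is the operator norm; $\|\cdot\|_F$ on tensors is the Frobenius norm. For $M\in\mathbb{C}^{n\times r}$, $\big((M\otimes M\otimes M).T\big)_{i_1i_2i_3}=\sum_{j_1,j_2,j_3=1}^nM_{j_1i_1}M_{j_2i_2}M_{j_3i_3}T_{j_1j_2j_3}$. *)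

theory Defs
  imports "HOL-Analysis.Analysis" "Jordan_Normal_Form.Matrix"
begin

text \<open>Matrices are Jordan_Normal_Form matrices over complex numbers;
 order-3 tensors in (C^d)^{\<otimes>3} are functions nat => nat => nat => complex,
 of which only the entries with all indices < d are relevant.\<close>

definition cconj_mat :: "complex mat \<Rightarrow> complex mat" where
  "cconj_mat A = map_mat cnj A"

definition cadj :: "complex mat \<Rightarrow> complex mat" where
  "cadj A = transpose_mat (map_mat cnj A)"

definition frob_mat :: "complex mat \<Rightarrow> real" where
  "frob_mat A = sqrt (\<Sum>i<dim_row A. \<Sum>j<dim_col A. (cmod (A $$ (i,j)))\<^sup>2)"

definition vnorm :: "complex vec \<Rightarrow> real" where
  "vnorm x = sqrt (\<Sum>i<dim_vec x. (cmod (x $ i))\<^sup>2)"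

definition op_norm :: "complex mat \<Rightarrow> real" where
  "op_norm A = Sup {vnorm (A *\<^sub>v x) | x. x \<in> carrier_vec (dim_col A) \<and> vnorm x \<le> 1}"

definition pinv :: "complex mat \<Rightarrow> complex mat" where
  "pinv A = (THE X. X \<in> carrier_mat (dim_col A) (dim_row A) \<and>
      A * X * A = A \<and> X * A * X = X \<and> cadj (A * X) = A * X \<and> cadj (X * A) = X * A)"

text \<open>kappa for the decomposition given by the rows of U.\<close>
definition kappa :: "complex mat \<Rightarrow> real" where
  "kappa U = (frob_mat U)\<^sup>2 + (frob_mat (pinv U))\<^sup>2"

definition frob_tensor :: "nat \<Rightarrow> (nat \<Rightarrow> nat \<Rightarrow> nat \<Rightarrow> complex) \<Rightarrow> real" where
  "frob_tensor d T = sqrt (\<Sum>i<d. \<Sum>j<d. \<Sum>k<d. (cmod (T i j k))\<^sup>2)"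

definition tensor_act3 :: "complex mat \<Rightarrow> (nat \<Rightarrow> nat \<Rightarrow> nat \<Rightarrow> complex) \<Rightarrow> (nat \<Rightarrow> nat \<Rightarrow> nat \<Rightarrow> complex)" where
  "tensor_act3 M T = (\<lambda>i1 i2 i3. \<Sum>j1<dim_row M. \<Sum>j2<dim_row M. \<Sum>j3<dim_row M.
      M $$ (j1,i1) * M $$ (j2,i2) * M $$ (j3,i3) * T j1 j2 j3)"

end

theory Submission
  imports Defs
begin

lemma sum3_swap: "(\<Sum>i\<in>A. \<Sum>j\<in>B. \<Sum>k\<in>C. f i j k) = (\<Sum>j\<in>B. \<Sum>k\<in>C. \<Sum>i\<in>A. f i j k)"
  by (subst sum.swap) (simp add: sum.swap[of _ A])

definition fr3 :: "nat \<Rightarrow> nat \<Rightarrow> nat \<Rightarrow> (nat \<Rightarrow> nat \<Rightarrow> nat \<Rightarrow> complex) \<Rightarrow> real" where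
  "fr3 d1 d2 d3 X = (\<Sum>i<d1. \<Sum>j<d2. \<Sum>k<d3. (cmod (X i j k))\<^sup>2)"

definition opb :: "nat \<Rightarrow> nat \<Rightarrow> (nat \<Rightarrow> nat \<Rightarrow> complex) \<Rightarrow> real \<Rightarrow> bool" where
  "opb n r a C \<longleftrightarrow> C \<ge> 0 \<and> (\<forall>y. (\<Sum>i<r. (cmod (\<Sum>j<n. a i j * y j))\<^sup>2) \<le> C\<^sup>2 * (\<Sum>j<n. (cmod (y j))\<^sup>2))"

lemma opb_D: "opb n r a C \<Longrightarrow> (\<Sum>i<r. (cmod (\<Sum>j<n. a i j * y j))\<^sup>2) \<le> C\<^sup>2 * (\<Sum>j<n. (cmod (y j))\<^sup>2)"
  unfolding opb_def by blast

lemma fr3_nonneg: "0 \<le> fr3 d1 d2 d3 X"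
  unfolding fr3_def by (intro sum_nonneg) auto

lemma mode1:
  assumes "opb n r a C"
  shows "fr3 r d2 d3 (\<lambda>i j k. \<Sum>l<n. a i l * X l j k) \<le> C\<^sup>2 * fr3 n d2 d3 X"
proof -
  have "fr3 r d2 d3 (\<lambda>i j k. \<Sum>l<n. a i l * X l j k) = (\<Sum>j<d2. \<Sum>k<d3. \<Sum>i<r. (cmod (\<Sum>l<n. a i l * X l j k))\<^sup>2)"
    unfolding fr3_def by (rule sum3_swap)
  also have "\<dots> \<le> (\<Sum>j<d2. \<Sum>k<d3. C\<^sup>2 * (\<Sum>l<n. (cmod (X l j k))\<^sup>2))"
    by (intro sum_mono opb_D[OF assms])
  also have "\<dots> = C\<^sup>2 * fr3 n d2 d3 X"
    by (simp only: fr3_def sum_distrib_left) (rule sum3_swap[symmetric])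
  finally show ?thesis .
qed

lemma mode2:
  assumes "opb n r b C"
  shows "fr3 d1 r d3 (\<lambda>i j k. \<Sum>l<n. b j l * X i l k) \<le> C\<^sup>2 * fr3 d1 n d3 X"
proof -
  have "fr3 d1 r d3 (\<lambda>i j k. \<Sum>l<n. b j l * X i l k) = (\<Sum>i<d1. \<Sum>k<d3. \<Sum>j<r. (cmod (\<Sum>l<n. b j l * X i l k))\<^sup>2)"
    unfolding fr3_def by (intro sum.cong refl sum.swap)
  also have "\<dots> \<le> (\<Sum>i<d1. \<Sum>k<d3. C\<^sup>2 * (\<Sum>l<n. (cmod (X i l k))\<^sup>2))"
    by (intro sum_mono opb_D[OF assms])
  also have "\<dots> = C\<^sup>2 * fr3 d1 n d3 X"
    unfolding fr3_def sum_distrib_left by (intro sum.cong refl sum.swap)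
  finally show ?thesis .
qed

lemma mode3:
  assumes "opb n r c C"
  shows "fr3 d1 d2 r (\<lambda>i j k. \<Sum>l<n. c k l * X i j l) \<le> C\<^sup>2 * fr3 d1 d2 n X"
proof -
  have "fr3 d1 d2 r (\<lambda>i j k. \<Sum>l<n. c k l * X i j l) \<le> (\<Sum>i<d1. \<Sum>j<d2. C\<^sup>2 * (\<Sum>l<n. (cmod (X i j l))\<^sup>2))"
    unfolding fr3_def by (intro sum_mono opb_D[OF assms])
  also have "\<dots> = C\<^sup>2 * fr3 d1 d2 n X"
    unfolding fr3_def sum_distrib_left by simp
  finally show ?thesis .
qed

definition act3 :: "nat \<Rightarrow> (nat \<Rightarrow> nat \<Rightarrow> complex) \<Rightarrow> (nat \<Rightarrow> nat \<Rightarrow> complex) \<Rightarrow> (nat \<Rightarrow> nat \<Rightarrow> complex)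
   \<Rightarrow> (nat \<Rightarrow> nat \<Rightarrow> nat \<Rightarrow> complex) \<Rightarrow> (nat \<Rightarrow> nat \<Rightarrow> nat \<Rightarrow> complex)" where
  "act3 n a b c X = (\<lambda>i1 i2 i3. \<Sum>j1<n. \<Sum>j2<n. \<Sum>j3<n. a i1 j1 * b i2 j2 * c i3 j3 * X j1 j2 j3)"

lemma act3_modes: "act3 n a b c X = (\<lambda>i j k. \<Sum>l<n. a i l *
   (\<lambda>i j k. \<Sum>l<n. b j l * (\<lambda>i j k. \<Sum>l<n. c k l * X i j l) i l k) l j k)"
  by (simp add: act3_def sum_distrib_left mult.assoc)

lemma act3_bound:
  assumes "opb n r a Ca" "opb n r b Cb" "opb n r c Cc"
  shows "fr3 r r r (act3 n a b c X) \<le> (Ca * Cb * Cc)\<^sup>2 * fr3 n n n X"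
proof -
  define Y3 where "Y3 = (\<lambda>i j k. \<Sum>l<n. c k l * X i j l)"
  define Y2 where "Y2 = (\<lambda>i j k. \<Sum>l<n. b j l * Y3 i l k)"
  have "fr3 r r r (act3 n a b c X) = fr3 r r r (\<lambda>i j k. \<Sum>l<n. a i l * Y2 l j k)"
    unfolding act3_modes Y2_def Y3_def ..
  also have "\<dots> \<le> Ca\<^sup>2 * fr3 n r r Y2" by (rule mode1[OF assms(1)])
  also have "\<dots> \<le> Ca\<^sup>2 * (Cb\<^sup>2 * fr3 n n r Y3)"
    unfolding Y2_def by (intro mult_left_mono mode2[OF assms(2)]) auto
  also have "\<dots> \<le> Ca\<^sup>2 * (Cb\<^sup>2 * (Cc\<^sup>2 * fr3 n n n X))"
    unfolding Y3_def by (intro mult_left_mono mode3[OF assms(3)]) auto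
  finally show ?thesis by (simp add: power_mult_distrib mult_ac)
qed

lemma frob_L2: "frob_tensor d X = L2_set (\<lambda>p. cmod (X (fst p) (fst (snd p)) (snd (snd p)))) ({..<d} \<times> {..<d} \<times> {..<d})"
  unfolding frob_tensor_def L2_set_def by (simp add: sum.cartesian_product split_def)

lemma frob_add: "frob_tensor d (\<lambda>i j k. X i j k + Y i j k) \<le> frob_tensor d X + frob_tensor d Y"
  unfolding frob_L2 by (rule order_trans[OF L2_set_mono L2_set_triangle_ineq]) (auto simp: norm_triangle_ineq)

lemma frob_nonneg: "0 \<le> frob_tensor d X"
  unfolding frob_tensor_def by (intro real_sqrt_ge_zero sum_nonneg) auto

lemma frob_cong: "(\<And>i j k. i < d \<Longrightarrow> j < d \<Longrightarrow> k < d \<Longrightarrow> X i j k = Y i j k) \<Longrightarrow> frob_tensor d X = frob_tensor d Y"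
  unfolding frob_tensor_def by (auto intro!: sum.cong arg_cong[where f=sqrt])

lemma frob_sum: "finite L \<Longrightarrow> frob_tensor d (\<lambda>i j k. \<Sum>l\<in>L. X l i j k) \<le> (\<Sum>l\<in>L. frob_tensor d (X l))"
proof (induction L rule: finite_induct)
  case empty
  then show ?case by (simp add: frob_tensor_def)
next
  case (insert x F)
  have "frob_tensor d (\<lambda>i j k. \<Sum>l\<in>insert x F. X l i j k) = frob_tensor d (\<lambda>i j k. X x i j k + (\<Sum>l\<in>F. X l i j k))"
    using insert by simp
  also have "\<dots> \<le> frob_tensor d (X x) + frob_tensor d (\<lambda>i j k. \<Sum>l\<in>F. X l i j k)"
    by (rule frob_add)
  also have "\<dots> \<le> frob_tensor d (X x) + (\<Sum>l\<in>F. frob_tensor d (X l))"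
    using insert by simp
  finally show ?case using insert by simp
qed

lemma frob_fr3: "frob_tensor d X = sqrt (fr3 d d d X)"
  unfolding frob_tensor_def fr3_def ..

lemma opb_nonneg: "opb n r a C \<Longrightarrow> C \<ge> 0"
  unfolding opb_def by simp

lemma frob_act3:
  assumes "opb n r a Ca" "opb n r b Cb" "opb n r c Cc"
  shows "frob_tensor r (act3 n a b c X) \<le> Ca * Cb * Cc * frob_tensor n X"
proof -
  have "frob_tensor r (act3 n a b c X) \<le> sqrt ((Ca * Cb * Cc)\<^sup>2 * fr3 n n n X)"
    unfolding frob_fr3 by (rule real_sqrt_le_mono[OF act3_bound[OF assms]])
  also have "\<dots> = Ca * Cb * Cc * frob_tensor n X"
    using opb_nonneg[OF assms(1)] opb_nonneg[OF assms(2)] opb_nonneg[OF assms(3)]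
    unfolding frob_fr3 by (simp add: real_sqrt_mult)
  finally show ?thesis .
qed

lemma opb_iff_L2: "opb n r a C \<longleftrightarrow> C \<ge> 0 \<and> (\<forall>y. L2_set (\<lambda>i. cmod (\<Sum>j<n. a i j * y j)) {..<r} \<le> C * L2_set (\<lambda>j. cmod (y j)) {..<n})"
proof -
  have "(S \<le> C\<^sup>2 * Y) \<longleftrightarrow> (sqrt S \<le> C * sqrt Y)" if "C \<ge> 0" for S Y :: real
  proof -
    have "sqrt (C\<^sup>2 * Y) = C * sqrt Y" using that by (simp add: real_sqrt_mult)
    then show ?thesis by (metis real_sqrt_le_iff)
  qed
  then show ?thesis unfolding opb_def L2_set_def by auto
qed

lemma opb_diff:
  assumes "opb n r a Ca" "opb n r d Cd"
  shows "opb n r (\<lambda>i j. a i j - d i j) (Ca + Cd)"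
proof -
  have ca: "Ca \<ge> 0" and cd: "Cd \<ge> 0" using assms opb_nonneg by auto
  have "L2_set (\<lambda>i. cmod (\<Sum>j<n. (a i j - d i j) * y j)) {..<r} \<le> (Ca + Cd) * L2_set (\<lambda>j. cmod (y j)) {..<n}" for y
  proof -
    have "L2_set (\<lambda>i. cmod (\<Sum>j<n. (a i j - d i j) * y j)) {..<r}
        \<le> L2_set (\<lambda>i. cmod (\<Sum>j<n. a i j * y j) + cmod (\<Sum>j<n. d i j * y j)) {..<r}"
      by (rule L2_set_mono) (auto simp: left_diff_distrib sum_subtractf norm_triangle_ineq4)
    also have "\<dots> \<le> L2_set (\<lambda>i. cmod (\<Sum>j<n. a i j * y j)) {..<r} + L2_set (\<lambda>i. cmod (\<Sum>j<n. d i j * y j)) {..<r}"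
      by (rule L2_set_triangle_ineq)
    also have "\<dots> \<le> Ca * L2_set (\<lambda>j. cmod (y j)) {..<n} + Cd * L2_set (\<lambda>j. cmod (y j)) {..<n}"
      using assms unfolding opb_iff_L2 by (intro add_mono) auto
    finally show ?thesis by (simp add: algebra_simps)
  qed
  then show ?thesis unfolding opb_iff_L2 using ca cd by auto
qed

lemma adj_bound:
  assumes C: "C \<ge> 0"
    and H: "\<And>z. (\<Sum>i<n. (cmod (\<Sum>j<r. m i j * z j))\<^sup>2) \<le> C\<^sup>2 * (\<Sum>j<r. (cmod (z j))\<^sup>2)"
  shows "opb n r (\<lambda>i j. cnj (m j i)) C"
  unfolding opb_def
proof (intro conjI allI C)
  fix y :: "nat \<Rightarrow> complex"
  define w where "w = (\<lambda>j. \<Sum>i<n. cnj (m i j) * y i)"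
  define v where "v = (\<lambda>i. \<Sum>j<r. m i j * w j)"
  define W where "W = (\<Sum>j<r. (cmod (w j))\<^sup>2)"
  define Y where "Y = (\<Sum>i<n. (cmod (y i))\<^sup>2)"
  define V where "V = (\<Sum>i<n. (cmod (v i))\<^sup>2)"
  have W0: "W \<ge> 0" "Y \<ge> 0" "V \<ge> 0" unfolding W_def Y_def V_def by (auto intro: sum_nonneg)
  have "complex_of_real W = (\<Sum>j<r. w j * cnj (w j))"
    unfolding W_def of_real_sum by (simp only: complex_norm_square)
  also have "\<dots> = (\<Sum>j<r. \<Sum>i<n. y i * (cnj (m i j) * cnj (w j)))"
    unfolding w_def by (simp add: sum_distrib_right mult_ac)
  also have "\<dots> = (\<Sum>i<n. y i * cnj (v i))"
    unfolding v_def by (subst sum.swap) (simp add: sum_distrib_left)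
  finally have Weq: "complex_of_real W = (\<Sum>i<n. y i * cnj (v i))" .
  have "W = cmod (complex_of_real W)" using W0 by simp
  also have "\<dots> \<le> (\<Sum>i<n. \<bar>cmod (y i)\<bar> * \<bar>cmod (v i)\<bar>)"
    unfolding Weq by (rule order_trans[OF norm_sum]) (simp add: norm_mult)
  also have "\<dots> \<le> L2_set (\<lambda>i. cmod (y i)) {..<n} * L2_set (\<lambda>i. cmod (v i)) {..<n}"
    by (rule L2_set_mult_ineq)
  also have "\<dots> = sqrt Y * sqrt V" unfolding L2_set_def Y_def V_def ..
  finally have "W \<le> sqrt Y * sqrt V" .
  then have "W\<^sup>2 \<le> (sqrt Y * sqrt V)\<^sup>2" using W0 by (intro power_mono) auto
  also have "\<dots> = Y * V" using W0 by (simp add: power_mult_distrib)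
  also have "\<dots> \<le> Y * (C\<^sup>2 * W)"
    using H[of w] W0 unfolding V_def W_def v_def by (intro mult_left_mono) auto
  finally have *: "W * W \<le> (C\<^sup>2 * Y) * W" by (simp add: power2_eq_square mult_ac)
  have "W \<le> C\<^sup>2 * Y"
  proof (cases "W = 0")
    case True then show ?thesis using W0 by simp
  next
    case False then have "W > 0" using W0 by simp
    then show ?thesis using * by (meson mult_right_le_imp_le)
  qed
  then show "(\<Sum>i<r. (cmod (\<Sum>j<n. cnj (m j i) * y j))\<^sup>2) \<le> C\<^sup>2 * (\<Sum>j<n. (cmod (y j))\<^sup>2)"
    unfolding W_def w_def Y_def .
qed

lemma cadj_mult_entry:
  assumes "P \<in> carrier_mat n r" "k < r" "j < r"
  shows "(cadj P * P) $$ (k,j) = (\<Sum>i<n. cnj (P $$ (i,k)) * P $$ (i,j))"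
  using assms by (simp add: cadj_def index_mult_mat scalar_prod_def atLeast0LessThan)

lemma semiunitary_isometry:
  assumes "P \<in> carrier_mat n r" "cadj P * P = 1\<^sub>m r"
  shows "(\<Sum>i<n. (cmod (\<Sum>j<r. P $$ (i,j) * z j))\<^sup>2) = (\<Sum>j<r. (cmod (z j))\<^sup>2)"
proof -
  have "complex_of_real (\<Sum>i<n. (cmod (\<Sum>j<r. P $$ (i,j) * z j))\<^sup>2)
      = (\<Sum>i<n. (\<Sum>j<r. P $$ (i,j) * z j) * cnj (\<Sum>k<r. P $$ (i,k) * z k))"
    unfolding of_real_sum by (simp only: complex_norm_square)
  also have "\<dots> = (\<Sum>i<n. \<Sum>k<r. \<Sum>j<r. z j * cnj (z k) * (cnj (P $$ (i,k)) * P $$ (i,j)))"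
    by (simp add: sum_distrib_left sum_distrib_right mult_ac)
  also have "\<dots> = (\<Sum>k<r. \<Sum>j<r. z j * cnj (z k) * (\<Sum>i<n. cnj (P $$ (i,k)) * P $$ (i,j)))"
    by (subst sum3_swap) (simp add: sum_distrib_left)
  also have "\<dots> = (\<Sum>k<r. \<Sum>j<r. z j * cnj (z k) * (if k = j then 1 else 0))"
    using assms by (intro sum.cong refl) (simp add: cadj_mult_entry[symmetric])
  also have "\<dots> = (\<Sum>j<r. z j * cnj (z j))"
    by (simp add: if_distrib cong: if_cong)
  also have "\<dots> = complex_of_real (\<Sum>j<r. (cmod (z j))\<^sup>2)"
    unfolding of_real_sum by (simp only: complex_norm_square)
  finally show ?thesis using of_real_eq_iff by blast
qed

lemma vnorm_L2: "vnorm v = L2_set (\<lambda>i. cmod (v $ i)) {..<dim_vec v}"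
  by (simp add: vnorm_def L2_set_def)

lemma opnorm_bound:
  assumes D: "D \<in> carrier_mat n r" and e: "op_norm D \<le> e"
  shows "e \<ge> 0 \<and> (\<Sum>i<n. (cmod (\<Sum>j<r. D $$ (i,j) * z j))\<^sup>2) \<le> e\<^sup>2 * (\<Sum>j<r. (cmod (z j))\<^sup>2)"
proof -
  have mv: "(D *\<^sub>v x) $ i = (\<Sum>j<r. D $$ (i,j) * x $ j)" if "x \<in> carrier_vec r" "i < n" for x i
    using D that by (simp add: scalar_prod_def atLeast0LessThan)
  have dimv: "dim_vec (D *\<^sub>v x) = n" for x using D by simp
  define S where "S = {vnorm (D *\<^sub>v x) | x. x \<in> carrier_vec (dim_col D) \<and> vnorm x \<le> 1}"
  define K where "K = (\<Sum>i<n. \<Sum>j<r. cmod (D $$ (i,j)))"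
  have bnd: "vnorm (D *\<^sub>v x) \<le> K" if x: "x \<in> carrier_vec r" "vnorm x \<le> 1" for x
  proof -
    have xj: "cmod (x $ j) \<le> 1" if "j < r" for j
    proof -
      have "cmod (x $ j) \<le> vnorm x" unfolding vnorm_L2 using x that
        by (intro member_le_L2_set[where f="\<lambda>i. cmod (x $ i)"]) auto
      then show ?thesis using x by simp
    qed
    have "vnorm (D *\<^sub>v x) \<le> (\<Sum>i<n. cmod ((D *\<^sub>v x) $ i))"
      unfolding vnorm_L2 dimv by (rule L2_set_le_sum) simp
    also have "\<dots> \<le> (\<Sum>i<n. \<Sum>j<r. cmod (D $$ (i,j)) * cmod (x $ j))"
    proof (intro sum_mono)
      fix i assume "i \<in> {..<n}"
      then have "cmod ((D *\<^sub>v x) $ i) = cmod (\<Sum>j<r. D $$ (i,j) * x $ j)" using mv x by simp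
      also have "\<dots> \<le> (\<Sum>j<r. cmod (D $$ (i,j) * x $ j))" by (rule norm_sum)
      also have "\<dots> = (\<Sum>j<r. cmod (D $$ (i,j)) * cmod (x $ j))" by (simp add: norm_mult)
      finally show "cmod ((D *\<^sub>v x) $ i) \<le> (\<Sum>j<r. cmod (D $$ (i,j)) * cmod (x $ j))" .
    qed
    also have "\<dots> \<le> K" unfolding K_def
      using xj by (intro sum_mono) (simp add: mult_left_le)
    finally show ?thesis .
  qed
  have bdd: "bdd_above S" unfolding S_def using D bnd by (intro bdd_aboveI[of _ K]) auto
  have upper: "vnorm (D *\<^sub>v x) \<le> e" if "x \<in> carrier_vec r" "vnorm x \<le> 1" for x
  proof -
    have "vnorm (D *\<^sub>v x) \<in> S" unfolding S_def using D that by auto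
    then have "vnorm (D *\<^sub>v x) \<le> Sup S" using bdd by (rule cSup_upper)
    then show ?thesis using e unfolding op_norm_def S_def by simp
  qed
  have e0: "e \<ge> 0"
  proof -
    have "vnorm (D *\<^sub>v 0\<^sub>v r) \<le> e" by (rule upper) (auto simp: vnorm_def)
    moreover have "vnorm (D *\<^sub>v 0\<^sub>v r) = 0" using D by (simp add: vnorm_def)
    ultimately show ?thesis by simp
  qed
  define N where "N = L2_set (\<lambda>j. cmod (z j)) {..<r}"
  have main: "L2_set (\<lambda>i. cmod (\<Sum>j<r. D $$ (i,j) * z j)) {..<n} \<le> e * N"
  proof (cases "N = 0")
    case True
    then have "z j = 0" if "j < r" for j using that unfolding N_def by (simp add: L2_set_eq_0_iff)
    then have "L2_set (\<lambda>i. cmod (\<Sum>j<r. D $$ (i,j) * z j)) {..<n} = 0"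
      by (intro L2_set_0') simp
    then show ?thesis using True by simp
  next
    case False
    then have N0: "N > 0" unfolding N_def using L2_set_nonneg[of "\<lambda>j. cmod (z j)" "{..<r}"] by linarith
    define x where "x = vec r (\<lambda>j. z j / complex_of_real N)"
    have xc: "x \<in> carrier_vec r" unfolding x_def by simp
    have "vnorm x = L2_set (\<lambda>j. cmod (z j) * (1 / N)) {..<r}"
      unfolding vnorm_L2 x_def using N0 by (intro L2_set_cong) (auto simp: norm_divide)
    also have "\<dots> = N * (1 / N)" unfolding N_def using N0 by (subst L2_set_left_distrib[symmetric]) auto
    also have "\<dots> = 1" using N0 by simp
    finally have "vnorm x \<le> 1" by simp
    then have "vnorm (D *\<^sub>v x) \<le> e" using upper xc by blast
    moreover have "vnorm (D *\<^sub>v x) = L2_set (\<lambda>i. cmod (\<Sum>j<r. D $$ (i,j) * z j) * (1 / N)) {..<n}"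
      unfolding vnorm_L2 dimv using xc N0
      by (intro L2_set_cong) (auto simp: mv x_def norm_divide sum_divide_distrib[symmetric])
    moreover have "\<dots> = L2_set (\<lambda>i. cmod (\<Sum>j<r. D $$ (i,j) * z j)) {..<n} * (1 / N)"
      using N0 by (subst L2_set_left_distrib) auto
    ultimately have "L2_set (\<lambda>i. cmod (\<Sum>j<r. D $$ (i,j) * z j)) {..<n} * (1 / N) \<le> e" by simp
    then show ?thesis using N0 by (simp add: field_simps)
  qed
  have "(\<Sum>i<n. (cmod (\<Sum>j<r. D $$ (i,j) * z j))\<^sup>2) = (L2_set (\<lambda>i. cmod (\<Sum>j<r. D $$ (i,j) * z j)) {..<n})\<^sup>2"
    unfolding L2_set_def by (simp add: sum_nonneg)
  also have "\<dots> \<le> (e * N)\<^sup>2" using main by (intro power_mono) auto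
  also have "\<dots> = e\<^sup>2 * (\<Sum>j<r. (cmod (z j))\<^sup>2)"
    unfolding N_def L2_set_def by (simp add: power_mult_distrib sum_nonneg)
  finally show ?thesis using e0 by simp
qed

lemma rank1_frob:
  fixes u :: "nat \<Rightarrow> complex" and n :: nat
  defines "s \<equiv> (\<Sum>i<n. (cmod (u i))\<^sup>2)"
  shows "frob_tensor n (\<lambda>i j k. u i * u j * u k) = s * sqrt s"
proof -
  have s0: "s \<ge> 0" unfolding s_def by (intro sum_nonneg) auto
  have "(\<Sum>i<n. \<Sum>j<n. \<Sum>k<n. (cmod (u i * u j * u k))\<^sup>2) = s * s * s"
    unfolding s_def by (simp add: norm_mult power_mult_distrib sum_distrib_left sum_distrib_right mult_ac)
  then have "frob_tensor n (\<lambda>i j k. u i * u j * u k) = sqrt (s * s * s)"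
    unfolding frob_tensor_def by simp
  also have "\<dots> = s * sqrt s" using s0 by (simp add: real_sqrt_mult)
  finally show ?thesis .
qed

lemma T_bound:
  assumes U_dim: "U \<in> carrier_mat r n"
    and T_decomp: "\<forall>i<n. \<forall>j<n. \<forall>k<n. T i j k = (\<Sum>l<r. U $$ (l,i) * U $$ (l,j) * U $$ (l,k))"
    and kb: "kappa U \<le> B"
  shows "frob_tensor n T \<le> B powr (3/2)"
proof -
  define s where "s = (\<lambda>l. \<Sum>i<n. (cmod (U $$ (l,i)))\<^sup>2)"
  define S where "S = (\<Sum>l<r. s l)"
  have s0: "s l \<ge> 0" for l unfolding s_def by (intro sum_nonneg) auto
  have S0: "S \<ge> 0" unfolding S_def using s0 by (intro sum_nonneg) auto
  have "frob_tensor n T = frob_tensor n (\<lambda>i j k. \<Sum>l<r. U $$ (l,i) * U $$ (l,j) * U $$ (l,k))"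
    using T_decomp by (intro frob_cong) auto
  also have "\<dots> \<le> (\<Sum>l<r. frob_tensor n (\<lambda>i j k. U $$ (l,i) * U $$ (l,j) * U $$ (l,k)))"
    by (rule frob_sum) simp
  also have "\<dots> = (\<Sum>l<r. s l * sqrt (s l))"
    unfolding s_def by (intro sum.cong refl rank1_frob)
  also have "\<dots> \<le> (\<Sum>l<r. s l * sqrt S)"
  proof (intro sum_mono mult_left_mono real_sqrt_le_mono s0)
    fix l assume "l \<in> {..<r}"
    then show "s l \<le> S" unfolding S_def using s0 by (intro member_le_sum) auto
  qed
  also have "\<dots> = S * sqrt S" unfolding S_def by (simp add: sum_distrib_right)
  finally have F: "frob_tensor n T \<le> S * sqrt S" .
  have "frob_mat U = sqrt S" unfolding frob_mat_def S_def s_def using U_dim by simp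
  then have "S \<le> kappa U" unfolding kappa_def using S0 by simp
  then have SB: "S \<le> B" using kb by simp
  have "S * sqrt S \<le> B * sqrt B" using SB S0 by (intro mult_mono real_sqrt_le_mono) auto
  also have "\<dots> = B powr (3/2)"
  proof (cases "B = 0")
    case True then show ?thesis by simp
  next
    case False
    then have "B > 0" using SB S0 by simp
    have "B powr (1 + 1/2) = B powr 1 * B powr (1/2)" by (metis powr_add)
    then show ?thesis using \<open>B > 0\<close> by (simp add: powr_half_sqrt)
  qed
  finally show ?thesis using F by simp
qed

lemma tensor_act3_conj:
  assumes "M \<in> carrier_mat n r" "i1 < r" "i2 < r" "i3 < r"
  shows "tensor_act3 (cconj_mat M) X i1 i2 i3 = act3 n (\<lambda>i j. cnj (M $$ (j,i))) (\<lambda>i j. cnj (M $$ (j,i))) (\<lambda>i j. cnj (M $$ (j,i))) X i1 i2 i3"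
  using assms unfolding tensor_act3_def act3_def cconj_mat_def by (auto intro!: sum.cong)

lemma act3_telescope:
  "act3 n a a a T i j k - act3 n a' a' a' T' i j k =
    act3 n (\<lambda>i j. a i j - a' i j) a a T i j k + act3 n a' (\<lambda>i j. a i j - a' i j) a T i j k
    + act3 n a' a' (\<lambda>i j. a i j - a' i j) T i j k + act3 n a' a' a' (\<lambda>x y z. T x y z - T' x y z) i j k"
proof -
  have L: "act3 n a a a T i j k - act3 n a' a' a' T' i j k =
    (\<Sum>j1<n. \<Sum>j2<n. \<Sum>j3<n. a i j1 * a j j2 * a k j3 * T j1 j2 j3 - a' i j1 * a' j j2 * a' k j3 * T' j1 j2 j3)"
    by (simp add: act3_def sum_subtractf)
  have R: "act3 n (\<lambda>i j. a i j - a' i j) a a T i j k + act3 n a' (\<lambda>i j. a i j - a' i j) a T i j k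
    + act3 n a' a' (\<lambda>i j. a i j - a' i j) T i j k + act3 n a' a' a' (\<lambda>x y z. T x y z - T' x y z) i j k =
    (\<Sum>j1<n. \<Sum>j2<n. \<Sum>j3<n. (a i j1 - a' i j1) * a j j2 * a k j3 * T j1 j2 j3
       + a' i j1 * (a j j2 - a' j j2) * a k j3 * T j1 j2 j3
       + a' i j1 * a' j j2 * (a k j3 - a' k j3) * T j1 j2 j3
       + a' i j1 * a' j j2 * a' k j3 * (T j1 j2 j3 - T' j1 j2 j3))"
    by (simp add: act3_def sum.distrib)
  show ?thesis unfolding L R by (intro sum.cong refl) (simp add: algebra_simps)
qed

theorem lemma5p7:
  fixes n r :: nat and U P P' :: "complex mat"
    and T T' :: "nat \<Rightarrow> nat \<Rightarrow> nat \<Rightarrow> complex"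
    and B \<delta> \<epsilon>1 :: real
  assumes U_dim: "U \<in> carrier_mat r n"
    and T_decomp: "\<forall>i<n. \<forall>j<n. \<forall>k<n. T i j k = (\<Sum>l<r. U $$ (l,i) * U $$ (l,j) * U $$ (l,k))"
    and U_indep: "\<forall>c :: nat \<Rightarrow> complex.
        (\<forall>j<n. (\<Sum>l<r. c l * U $$ (l,j)) = 0) \<longrightarrow> (\<forall>l<r. c l = 0)"
    and kappa_bound: "kappa U \<le> B"
    and TT': "frob_tensor n (\<lambda>i j k. T i j k - T' i j k) \<le> \<delta>"
    and P_dim: "P \<in> carrier_mat n r"
    and P_semiunitary: "cadj P * P = 1\<^sub>m r"
    and P_span: "{P *\<^sub>v x | x. x \<in> carrier_vec r} =
        {vec n (\<lambda>j. \<Sum>l<r. c l * U $$ (l,j)) | c :: nat \<Rightarrow> complex. True}"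
    and P'_dim: "P' \<in> carrier_mat n r"
    and PP': "op_norm (P - P') \<le> \<epsilon>1"
    and eps_lt: "\<epsilon>1 < 1"
  shows "frob_tensor r (\<lambda>i j k. tensor_act3 (cconj_mat P) T i j k - tensor_act3 (cconj_mat P') T' i j k)
         \<le> 7 * \<epsilon>1 * real r powr (7/2) * B powr (3/2) + 8 * \<delta> * real r powr (3/2)"
proof (cases "r = 0")
  case True
  then show ?thesis using TT' frob_nonneg[of n] by (simp add: frob_tensor_def)
next
  case False
  then have r1: "real r \<ge> 1" by simp
  define a where "a = (\<lambda>i j. cnj (P $$ (j,i)))"
  define a' where "a' = (\<lambda>i j. cnj (P' $$ (j,i)))"
  define d where "d = (\<lambda>i j. a i j - a' i j)"
  define D where "D = P - P'"
  have Dc: "D \<in> carrier_mat n r" using P_dim P'_dim D_def by auto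
  have ob: "\<epsilon>1 \<ge> 0 \<and> (\<Sum>i<n. (cmod (\<Sum>j<r. D $$ (i,j) * z j))\<^sup>2) \<le> \<epsilon>1\<^sup>2 * (\<Sum>j<r. (cmod (z j))\<^sup>2)" for z
    using opnorm_bound[OF Dc] PP' unfolding D_def by blast
  have e0: "\<epsilon>1 \<ge> 0" using ob by blast
  have opa0: "opb n r (\<lambda>i j. cnj ((\<lambda>i j. P $$ (i,j)) j i)) 1"
    by (rule adj_bound) (simp_all add: semiunitary_isometry[OF P_dim P_semiunitary])
  have opa: "opb n r a 1" using opa0 unfolding a_def by simp
  have opd0: "opb n r (\<lambda>i j. cnj ((\<lambda>i j. P $$ (i,j) - P' $$ (i,j)) j i)) \<epsilon>1"
  proof (rule adj_bound[OF e0])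
    fix z :: "nat \<Rightarrow> complex"
    have "(\<Sum>i<n. (cmod (\<Sum>j<r. (P $$ (i,j) - P' $$ (i,j)) * z j))\<^sup>2) = (\<Sum>i<n. (cmod (\<Sum>j<r. D $$ (i,j) * z j))\<^sup>2)"
      unfolding D_def using P_dim P'_dim by (intro sum.cong refl arg_cong[where f="\<lambda>x. (cmod x)\<^sup>2"]) auto
    then show "(\<Sum>i<n. (cmod (\<Sum>j<r. (P $$ (i,j) - P' $$ (i,j)) * z j))\<^sup>2) \<le> \<epsilon>1\<^sup>2 * (\<Sum>j<r. (cmod (z j))\<^sup>2)"
      using ob by simp
  qed
  have opd: "opb n r d \<epsilon>1" using opd0 unfolding d_def a_def a'_def by simp
  have opa': "opb n r a' (1 + \<epsilon>1)"
  proof -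
    have "opb n r (\<lambda>i j. a i j - d i j) (1 + \<epsilon>1)" by (rule opb_diff[OF opa opd])
    moreover have "(\<lambda>i j. a i j - d i j) = a'" unfolding d_def by simp
    ultimately show ?thesis by simp
  qed
  define F where "F = frob_tensor n T"
  have F0: "F \<ge> 0" unfolding F_def by (rule frob_nonneg)
  have FB: "F \<le> B powr (3/2)" unfolding F_def by (rule T_bound[OF U_dim T_decomp kappa_bound])
  have d0: "\<delta> \<ge> 0" using TT' frob_nonneg[of n] by (meson order_trans)
  define f1 where "f1 = act3 n d a a T"
  define f2 where "f2 = act3 n a' d a T"
  define f3 where "f3 = act3 n a' a' d T"
  define f4 where "f4 = act3 n a' a' a' (\<lambda>x y z. T x y z - T' x y z)"
  have "frob_tensor r (\<lambda>i j k. tensor_act3 (cconj_mat P) T i j k - tensor_act3 (cconj_mat P') T' i j k)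
      = frob_tensor r (\<lambda>i j k. f1 i j k + f2 i j k + f3 i j k + f4 i j k)"
  proof (rule frob_cong)
    fix i j k assume "i < r" "j < r" "k < r"
    then show "tensor_act3 (cconj_mat P) T i j k - tensor_act3 (cconj_mat P') T' i j k = f1 i j k + f2 i j k + f3 i j k + f4 i j k"
      unfolding f1_def f2_def f3_def f4_def d_def
      using tensor_act3_conj[OF P_dim] tensor_act3_conj[OF P'_dim] act3_telescope
      unfolding a_def a'_def by simp
  qed
  also have "\<dots> \<le> frob_tensor r (\<lambda>i j k. f1 i j k + f2 i j k + f3 i j k) + frob_tensor r f4"
    by (rule frob_add)
  also have "\<dots> \<le> frob_tensor r (\<lambda>i j k. f1 i j k + f2 i j k) + frob_tensor r f3 + frob_tensor r f4"
    using frob_add[of r "\<lambda>i j k. f1 i j k + f2 i j k" f3] by simp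
  also have "\<dots> \<le> frob_tensor r f1 + frob_tensor r f2 + frob_tensor r f3 + frob_tensor r f4"
    using frob_add[of r f1 f2] by simp
  also have "\<dots> \<le> \<epsilon>1 * 1 * 1 * F + (1 + \<epsilon>1) * \<epsilon>1 * 1 * F + (1 + \<epsilon>1) * (1 + \<epsilon>1) * \<epsilon>1 * F
       + (1 + \<epsilon>1) * (1 + \<epsilon>1) * (1 + \<epsilon>1) * \<delta>"
  proof -
    have "frob_tensor r f4 \<le> (1 + \<epsilon>1) * (1 + \<epsilon>1) * (1 + \<epsilon>1) * frob_tensor n (\<lambda>x y z. T x y z - T' x y z)"
      unfolding f4_def by (rule frob_act3[OF opa' opa' opa'])
    also have "\<dots> \<le> (1 + \<epsilon>1) * (1 + \<epsilon>1) * (1 + \<epsilon>1) * \<delta>"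
      using TT' e0 by (intro mult_left_mono) auto
    finally have "frob_tensor r f4 \<le> (1 + \<epsilon>1) * (1 + \<epsilon>1) * (1 + \<epsilon>1) * \<delta>" .
    moreover have "frob_tensor r f1 \<le> \<epsilon>1 * 1 * 1 * F" unfolding f1_def F_def by (rule frob_act3[OF opd opa opa])
    moreover have "frob_tensor r f2 \<le> (1 + \<epsilon>1) * \<epsilon>1 * 1 * F" unfolding f2_def F_def by (rule frob_act3[OF opa' opd opa])
    moreover have "frob_tensor r f3 \<le> (1 + \<epsilon>1) * (1 + \<epsilon>1) * \<epsilon>1 * F" unfolding f3_def F_def by (rule frob_act3[OF opa' opa' opd])
    ultimately show ?thesis by linarith
  qed
  also have "\<dots> \<le> 7 * \<epsilon>1 * F + 8 * \<delta>"
  proof -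
    have q1: "(1 + \<epsilon>1) \<le> 2" using eps_lt by simp
    have q2: "(1 + \<epsilon>1) * (1 + \<epsilon>1) \<le> 2 * 2" using q1 e0 by (intro mult_mono) auto
    have q3: "(1 + \<epsilon>1) * (1 + \<epsilon>1) * (1 + \<epsilon>1) \<le> (2 * 2) * 2" using q1 q2 e0 by (intro mult_mono) auto
    have "(1 + \<epsilon>1) * (\<epsilon>1 * F) \<le> 2 * (\<epsilon>1 * F)" using q1 e0 F0 by (intro mult_right_mono) auto
    moreover have "((1 + \<epsilon>1) * (1 + \<epsilon>1)) * (\<epsilon>1 * F) \<le> 4 * (\<epsilon>1 * F)" using q2 e0 F0 by (intro mult_right_mono) auto
    moreover have "((1 + \<epsilon>1) * (1 + \<epsilon>1) * (1 + \<epsilon>1)) * \<delta> \<le> 8 * \<delta>" using q3 d0 by (intro mult_right_mono) auto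
    ultimately show ?thesis by (simp add: algebra_simps)
  qed
  also have "\<dots> \<le> 7 * \<epsilon>1 * real r powr (7/2) * B powr (3/2) + 8 * \<delta> * real r powr (3/2)"
  proof -
    have r72: "real r powr (7/2) \<ge> 1" and r32: "real r powr (3/2) \<ge> 1" using r1 by (auto intro: ge_one_powr_ge_zero)
    have Bp: "B powr (3/2) \<ge> 0" by simp
    have "\<epsilon>1 * F \<le> \<epsilon>1 * (real r powr (7/2) * B powr (3/2))"
    proof (intro mult_left_mono e0)
      have "F \<le> 1 * B powr (3/2)" using FB by simp
      also have "\<dots> \<le> real r powr (7/2) * B powr (3/2)" using r72 Bp by (intro mult_right_mono) auto
      finally show "F \<le> real r powr (7/2) * B powr (3/2)" .
    qed
    moreover have "\<delta> * 1 \<le> \<delta> * real r powr (3/2)" using d0 r32 by (intro mult_left_mono) auto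
    ultimately show ?thesis by (simp add: algebra_simps)
  qed
  finally show ?thesis .
qed

end
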